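(* Let $k\in\mathbb{R}$, $\upsilon$ a multiplier system of weight $k$ with cusp parameter $m$, $\rho:\Gamma\to GL_d(\mathbb{C})$ a representation, and suppose $F=(f_1,\dots,f_d)^t\in\mathcal{H}(k,\rho,\upsilon)$ has linearly independent components. Then the following are equivalent: (i) for each $1\le j\le d$ there is a convergent $q$-expansion $f_j(q)=q^{\lambda_j}\sum_{n\ge0}a_j(n)q^n$ with $\lambda_j\ge0$; (ii) $\rho(T)=\mathrm{diag}(\mathbf{e}(r_1),\dots,\mathbf{e}(r_d))$ for some real numbers $r_j$.
   Context: $\Gamma=SL(2,\mathbb{Z})$ acts on the upper half-plane $\mathbb{H}$ by Möbius transformations; $T=\begin{pmatrix}1&1\\0&1\end{pmatrix}$; $q=e^{2\pi iz}$, $q^\lambda=e^{2\pi i\lambda z}$, $\mathbf{e}(r)=e^{2\pi ir}$. Complex powers use the principal branch of $\log$. A multiplier system of weight $k$ is a map $\upsilon:\Gamma\to\{|w|=1\}$ such that $\nu(\gamma,z)=\upsilon(\gamma)(cz+d)^k$ satisfies $\nu(\gamma\sigma,z)=\nu(\gamma,\sigma z)\nu(\sigma,z)$; its cusp parameter is the $m\in[0,12)$ with $\upsilon(T)=\mathbf{e}(m/12)$. Slash: $(f|_k^\upsilon\gamma)(z)=\upsilon(\gamma)^{-1}(cz+d)^{-k}f(\gamma z)$. Moderate growth: $|f(x+iy)|\le y^N$ for $y>c$. $\mathcal{H}(k,\rho,\upsilon)$: column vectors $F$ of holomorphic moderate-growth functions on $\mathbb{H}$ with $F|_k^\upsilon\gamma=\rho(\gamma)F$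 for all $\gamma$. "Convergent $q$-expansion" means $f_j(z)=e^{2\pi i\lambda_jz}\sum_{n\ge0}a_j(n)e^{2\pi inz}$ for all $z\in\mathbb{H}$. *)

theory Defs
  imports "HOL-Complex_Analysis.Complex_Analysis"
begin

(* Elements of SL(2,Z) are represented as (a,b,c,d) standing for the matrix [[a,b],[c,d]]. *)
type_synonym sl2 = "int \<times> int \<times> int \<times> int"

definition SL2Z :: "sl2 set" where
  "SL2Z = {(a,b,c,d). a*d - b*c = 1}"

fun sl2_mult :: "sl2 \<Rightarrow> sl2 \<Rightarrow> sl2" where
  "sl2_mult (a,b,c,d) (a',b',c',d') = (a*a' + b*c', a*b' + b*d', c*a' + d*c', c*b' + d*d')"

definition T_mat :: sl2 where "T_mat = (1,1,0,1)"

definition upper_half_plane :: "complex set" where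
  "upper_half_plane = {z. Im z > 0}"

fun moebius :: "sl2 \<Rightarrow> complex \<Rightarrow> complex" where
  "moebius (a,b,c,d) z = (of_int a * z + of_int b) / (of_int c * z + of_int d)"

(* automorphy factor (cz+d)^k, principal branch *)
fun aut_fac :: "real \<Rightarrow> sl2 \<Rightarrow> complex \<Rightarrow> complex" where
  "aut_fac k (a,b,c,d) z = (of_int c * z + of_int d) powr (of_real k)"

definition e :: "real \<Rightarrow> complex" where
  "e r = exp (2 * pi * \<i> * of_real r)"

definition multiplier_system :: "real \<Rightarrow> (sl2 \<Rightarrow> complex) \<Rightarrow> bool" where
  "multiplier_system k v \<longleftrightarrow>
     (\<forall>\<gamma>\<in>SL2Z. norm (v \<gamma>) = 1) \<and>
     (\<forall>\<gamma>\<in>SL2Z. \<forall>\<sigma>\<in>SL2Z. \<forall>z\<in>upper_half_plane.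
        v (sl2_mult \<gamma> \<sigma>) * aut_fac k (sl2_mult \<gamma> \<sigma>) z
        = (v \<gamma> * aut_fac k \<gamma> (moebius \<sigma> z)) * (v \<sigma> * aut_fac k \<sigma> z))"

definition cusp_parameter :: "(sl2 \<Rightarrow> complex) \<Rightarrow> real \<Rightarrow> bool" where
  "cusp_parameter v m \<longleftrightarrow> 0 \<le> m \<and> m < 12 \<and> v T_mat = e (m / 12)"

definition representation :: "(sl2 \<Rightarrow> complex^'d^'d) \<Rightarrow> bool" where
  "representation \<rho> \<longleftrightarrow>
     (\<forall>\<gamma>\<in>SL2Z. invertible (\<rho> \<gamma>)) \<and>
     (\<forall>\<gamma>\<in>SL2Z. \<forall>\<sigma>\<in>SL2Z. \<rho> (sl2_mult \<gamma> \<sigma>) = \<rho> \<gamma> ** \<rho> \<sigma>)"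

definition moderate_growth :: "(complex \<Rightarrow> complex) \<Rightarrow> bool" where
  "moderate_growth f \<longleftrightarrow>
     (\<exists>N c. \<forall>x y. y > c \<and> y > 0 \<longrightarrow> norm (f (Complex x y)) \<le> y powr N)"

definition slash :: "real \<Rightarrow> (sl2 \<Rightarrow> complex) \<Rightarrow> (complex \<Rightarrow> complex^'d) \<Rightarrow> sl2 \<Rightarrow> complex \<Rightarrow> complex^'d" where
  "slash k v F \<gamma> z = (\<chi> j. inverse (v \<gamma>) * inverse (aut_fac k \<gamma> z) * F (moebius \<gamma> z) $ j)"

definition vvmf_space :: "real \<Rightarrow> (sl2 \<Rightarrow> complex^'d^'d) \<Rightarrow> (sl2 \<Rightarrow> complex) \<Rightarrow> (complex \<Rightarrow> complex^'d) set" where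
  "vvmf_space k \<rho> v = {F.
     (\<forall>j. (\<lambda>z. F z $ j) holomorphic_on upper_half_plane) \<and>
     (\<forall>j. moderate_growth (\<lambda>z. F z $ j)) \<and>
     (\<forall>\<gamma>\<in>SL2Z. \<forall>z\<in>upper_half_plane. slash k v F \<gamma> z = \<rho> \<gamma> *v F z)}"

definition components_lin_indep :: "(complex \<Rightarrow> complex^'d) \<Rightarrow> bool" where
  "components_lin_indep F \<longleftrightarrow>
     (\<forall>c :: 'd \<Rightarrow> complex. (\<forall>z\<in>upper_half_plane. (\<Sum>j\<in>UNIV. c j * F z $ j) = 0) \<longrightarrow> (\<forall>j. c j = 0))"

definition has_convergent_q_expansion :: "(complex \<Rightarrow> complex) \<Rightarrow> real \<Rightarrow> (nat \<Rightarrow> complex) \<Rightarrow> bool" where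
  "has_convergent_q_expansion f lam a \<longleftrightarrow>
     (\<forall>z\<in>upper_half_plane. \<exists>s. (\<lambda>n. a n * exp (2 * pi * \<i> * of_nat n * z)) sums s \<and>
        f z = exp (2 * pi * \<i> * of_real lam * z) * s)"

end

theory Submission imports Defs "HOL-Real_Asymp.Real_Asymp" begin

lemma per_int:
  assumes per: "\<forall>z\<in>upper_half_plane. g (z+1) = g z" and z: "z \<in> upper_half_plane"
  shows "g (z + of_int n) = g z"
proof -
  have pos: "g (z + of_nat k) = g z" if "z \<in> upper_half_plane" for z k
    using that
  proof (induction k)
    case (Suc k)
    have "z + of_nat k \<in> upper_half_plane" using Suc.prems by (simp add: upper_half_plane_def)
    then have "g (z + of_nat k + 1) = g (z + of_nat k)" using per by blast
    then show ?case using Suc by (simp add: ac_simps)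
  qed simp
  show ?thesis
  proof (cases "n \<ge> 0")
    case True
    then show ?thesis using pos[OF z, of "nat n"] by simp
  next
    case False
    define k where "k = nat (-n)"
    have "z + of_int n \<in> upper_half_plane" using z by (simp add: upper_half_plane_def)
    from pos[OF this, of k] False show ?thesis by (simp add: k_def)
  qed
qed

lemma Im_Ln_div:
  assumes "q \<noteq> 0" shows "Im (Ln q / (2 * pi * \<i>)) = - ln (norm q) / (2*pi)"
  using assms by (simp add: Im_divide Re_Ln power2_eq_square field_simps)

lemma Ln_div_in_H:
  assumes "q \<noteq> 0" "norm q < 1" shows "Ln q / (2 * pi * \<i>) \<in> upper_half_plane"
proof -
  have "ln (norm q) < 0" using assms by simp
  then show ?thesis using Im_Ln_div[OF assms(1)] by (simp add: upper_half_plane_def divide_neg_pos)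
qed

lemma G_eq:
  assumes per: "\<forall>z\<in>upper_half_plane. g (z+1) = g z"
    and w: "w \<in> upper_half_plane" and q: "q \<noteq> 0" "norm q < 1"
    and ex: "exp (2*pi*\<i>*w) = q"
  shows "g (Ln q / (2*pi*\<i>)) = g w"
proof -
  have "exp (2*pi*\<i>*w) = exp (2*pi*\<i>*(Ln q / (2*pi*\<i>)))" using ex q by simp
  then obtain n::int where "2*pi*\<i>*w = 2*pi*\<i>*(Ln q / (2*pi*\<i>)) + of_int (2*n) * pi * \<i>"
    by (auto simp: exp_eq)
  then have "w = Ln q / (2*pi*\<i>) + of_int n"
    by (simp add: field_simps)
  then show ?thesis using per_int[OF per Ln_div_in_H[OF q]] by simp
qed

lemma qexp_periodic:
  assumes hol: "g holomorphic_on upper_half_plane"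
    and per: "\<forall>z\<in>upper_half_plane. g (z+1) = g z"
    and dl: "\<delta> < 1"
    and bd: "\<forall>z\<in>upper_half_plane. Im z > C \<longrightarrow> norm (g z) \<le> exp (2*pi*\<delta>*Im z) * Im z powr N"
  shows "\<exists>a. \<forall>z\<in>upper_half_plane. (\<lambda>n. a n * exp (2 * pi * \<i> * of_nat n * z)) sums g z"
proof -
  define G where "G = (\<lambda>q. g (Ln q / (2*pi*\<i>)))"
  define S where "S = ball 0 1 - {0::complex}"
  have oS: "open S" unfolding S_def by auto
  have S_iff: "q \<in> S \<longleftrightarrow> q \<noteq> 0 \<and> norm q < 1" for q by (auto simp: S_def)
  have holA: "G holomorphic_on (S - \<real>\<^sub>\<le>\<^sub>0)"
  proof -
    have "(g \<circ> (\<lambda>q. Ln q / (2*pi*\<i>))) holomorphic_on (S - \<real>\<^sub>\<le>\<^sub>0)"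
    proof (rule holomorphic_on_compose_gen[OF _ hol])
      show "(\<lambda>q. Ln q / (2*pi*\<i>)) holomorphic_on (S - \<real>\<^sub>\<le>\<^sub>0)"
        by (intro holomorphic_intros) auto
      show "(\<lambda>q. Ln q / (2*pi*\<i>)) ` (S - \<real>\<^sub>\<le>\<^sub>0) \<subseteq> upper_half_plane"
        using Ln_div_in_H S_iff by auto
    qed
    then show ?thesis by (simp only: G_def o_def)
  qed
  have holB: "G holomorphic_on (S - \<real>\<^sub>\<ge>\<^sub>0)"
  proof -
    have mem: "Ln (-q) / (2*pi*\<i>) + 1/2 \<in> upper_half_plane" if "q \<in> S" for q
    proof -
      have "Ln (-q) / (2*pi*\<i>) \<in> upper_half_plane" using that S_iff Ln_div_in_H[of "-q"] by auto
      then show ?thesis by (simp add: upper_half_plane_def)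
    qed
    have "(g \<circ> (\<lambda>q. Ln (-q) / (2*pi*\<i>) + 1/2)) holomorphic_on (S - \<real>\<^sub>\<ge>\<^sub>0)"
    proof (rule holomorphic_on_compose_gen[OF _ hol])
      have "(\<lambda>q. Ln (-q)) holomorphic_on (S - \<real>\<^sub>\<ge>\<^sub>0)"
      proof (rule holomorphic_on_Ln')
        fix q assume "q \<in> S - \<real>\<^sub>\<ge>\<^sub>0"
        then show "-q \<notin> \<real>\<^sub>\<le>\<^sub>0"
          by (metis DiffD2 neg_0_le_iff_le nonpos_Reals_cases nonneg_Reals_of_real_iff of_real_minus minus_minus)
      qed (intro holomorphic_intros)
      then show "(\<lambda>q. Ln (-q) / (2*pi*\<i>) + 1/2) holomorphic_on (S - \<real>\<^sub>\<ge>\<^sub>0)"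
        by (intro holomorphic_intros) auto
      show "(\<lambda>q. Ln (-q) / (2*pi*\<i>) + 1/2) ` (S - \<real>\<^sub>\<ge>\<^sub>0) \<subseteq> upper_half_plane"
        using mem by auto
    qed
    moreover have "G q = (g \<circ> (\<lambda>q. Ln (-q) / (2*pi*\<i>) + 1/2)) q" if "q \<in> S - \<real>\<^sub>\<ge>\<^sub>0" for q
    proof -
      have qS: "q \<noteq> 0" "norm q < 1" using that S_iff by auto
      have "2*pi*\<i>*(Ln (-q) / (2*pi*\<i>) + 1/2) = Ln (-q) + pi*\<i>"
        by (simp add: field_simps)
      then have "exp (2*pi*\<i>*(Ln (-q) / (2*pi*\<i>) + 1/2)) = q"
        using qS by (simp add: exp_add)
      from G_eq[OF per mem qS this] that show ?thesis by (simp add: G_def)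
    qed
    ultimately show ?thesis using holomorphic_transform by metis
  qed
  have holG: "G holomorphic_on S"
  proof -
    have "S = (S - \<real>\<^sub>\<le>\<^sub>0) \<union> (S - \<real>\<^sub>\<ge>\<^sub>0)"
    proof safe
      fix q assume "q \<in> S" "q \<in> \<real>\<^sub>\<le>\<^sub>0" "q \<in> \<real>\<^sub>\<ge>\<^sub>0"
      then show False using S_iff
        by (metis antisym nonneg_Reals_cases nonpos_Reals_cases of_real_0 of_real_eq_iff)
    qed
    moreover have "G holomorphic_on ((S - \<real>\<^sub>\<le>\<^sub>0) \<union> (S - \<real>\<^sub>\<ge>\<^sub>0))"
      by (intro holomorphic_on_Un holA holB open_Diff oS closed_nonpos_Reals_complex closed_nonneg_Reals_complex)
    ultimately show ?thesis by simp
  qed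
  define y where "y = (\<lambda>q::complex. - ln (norm q) / (2*pi))"
  have ylim: "filterlim y at_top (at 0)"
    unfolding filterlim_at_top
  proof
    fix Z :: real
    have "eventually (\<lambda>q. norm q < exp (-2*pi*Z)) (at (0::complex))"
      unfolding eventually_at by (intro exI[of _ "exp (-2*pi*Z)"]) auto
    moreover have "eventually (\<lambda>q. q \<noteq> (0::complex)) (at 0)"
      by (simp add: eventually_at_filter)
    ultimately show "eventually (\<lambda>q. Z \<le> y q) (at 0)"
    proof eventually_elim
      case (elim q)
      then have "ln (norm q) < ln (exp (-2*pi*Z))" by (intro ln_less_cancel_iff[THEN iffD2]) auto
      then have "ln (norm q) < -2*pi*Z" by simp
      then show ?case unfolding y_def using pi_gt_zero by (simp add: field_simps)
    qed
  qed
  define \<phi> where "\<phi> = (\<lambda>t. exp (-2*pi*(1-\<delta>)*t) * t powr N)"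
  have philim: "(\<phi> \<longlongrightarrow> 0) at_top" unfolding \<phi>_def using dl by real_asymp
  have lim1: "((\<lambda>q. \<phi> (y q)) \<longlongrightarrow> 0) (at 0)"
    using filterlim_compose[OF philim ylim] by simp
  have lim: "((\<lambda>q. q * G q) \<longlongrightarrow> 0) (at 0)"
  proof (rule Lim_null_comparison[OF _ lim1])
    have "eventually (\<lambda>q. q \<in> S) (at 0)"
      unfolding eventually_at S_def by (intro exI[of _ 1]) (auto simp: dist_norm)
    moreover have "eventually (\<lambda>q. max C 0 + 1 \<le> y q) (at 0)"
      using ylim unfolding filterlim_at_top by blast
    ultimately show "eventually (\<lambda>q. norm (q * G q) \<le> \<phi> (y q)) (at 0)"
    proof eventually_elim
      case (elim q)
      then have q: "q \<noteq> 0" "norm q < 1" using S_iff by auto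
      define w where "w = Ln q / (2*pi*\<i>)"
      have wH: "w \<in> upper_half_plane" unfolding w_def using Ln_div_in_H[OF q] .
      have Imw: "Im w = y q" unfolding w_def y_def using Im_Ln_div[OF q(1)] by simp
      have gb: "norm (g w) \<le> exp (2*pi*\<delta>*y q) * y q powr N"
        using bd wH Imw elim(2) by force
      have nq: "norm q = exp (-2*pi*y q)"
        unfolding y_def using q by simp
      have "norm (q * G q) = exp (-2*pi*y q) * norm (g w)"
        by (simp add: G_def w_def norm_mult nq)
      also have "\<dots> \<le> exp (-2*pi*y q) * (exp (2*pi*\<delta>*y q) * y q powr N)"
        by (intro mult_left_mono gb) auto
      also have "\<dots> = exp (-2*pi*y q + 2*pi*\<delta>*y q) * y q powr N"
        by (simp only: exp_add mult.assoc)
      also have "-2*pi*y q + 2*pi*\<delta>*y q = -2*pi*(1-\<delta>)*y q"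
        by (simp add: algebra_simps)
      also have "exp (-2*pi*(1-\<delta>)*y q) * y q powr N = \<phi> (y q)"
        unfolding \<phi>_def ..
      finally show ?case .
    qed
  qed
  define h where "h = (\<lambda>q. if q = 0 then 0 else q * G q)"
  have holh: "h holomorphic_on ball 0 1"
    unfolding h_def
  proof (rule removable_singularity[OF _ _ lim])
    show "(\<lambda>q. q * G q) holomorphic_on ball 0 1 - {0}"
      using holG unfolding S_def by (intro holomorphic_intros)
  qed auto
  define P where "P = (\<lambda>z. if z = 0 then deriv h 0 else (h z - h 0) / (z - 0))"
  have holP: "P holomorphic_on ball 0 1"
    unfolding P_def by (rule pole_lemma_open[OF holh]) auto
  define a where "a = (\<lambda>n. (deriv ^^ n) P 0 / fact n)"
  show ?thesis
  proof (intro exI[of _ a] ballI)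
    fix z assume zH: "z \<in> upper_half_plane"
    define q where "q = exp (2*pi*\<i>*z)"
    have nq: "norm q = exp (-2*pi*Im z)" unfolding q_def by simp
    have q: "q \<noteq> 0" "norm q < 1" using zH
      by (auto simp: q_def nq upper_half_plane_def)
    have "(\<lambda>n. a n * (q - 0)^n) sums P q"
      unfolding a_def by (rule holomorphic_power_series[OF holP]) (use q in auto)
    moreover have "P q = g z"
      using G_eq[OF per zH q q_def[symmetric]] q by (simp add: P_def h_def G_def)
    moreover have "q ^ n = exp (2 * pi * \<i> * of_nat n * z)" for n
      unfolding q_def exp_of_nat_mult[symmetric] by (simp add: algebra_simps)
    ultimately show "(\<lambda>n. a n * exp (2 * pi * \<i> * of_nat n * z)) sums g z" by simp
  qed
qed

lemma e_add_int: "e (r + of_int n) = e r"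
proof -
  have "exp (2 * pi * \<i> * of_real (of_int n)) = 1"
    using exp_eq[of "2 * pi * \<i> * of_real (of_int n)" 0] by (auto simp: algebra_simps)
  then show ?thesis unfolding e_def by (simp add: distrib_left exp_add)
qed

lemma qexp_f:
  assumes hol: "f holomorphic_on upper_half_plane" and mg: "moderate_growth f"
    and tr: "\<forall>z\<in>upper_half_plane. f (z+1) = e \<mu> * f z"
  shows "\<exists>lam a. lam \<ge> 0 \<and> has_convergent_q_expansion f lam a"
proof -
  define lam where "lam = \<mu> - of_int \<lfloor>\<mu>\<rfloor>"
  have lam: "0 \<le> lam" "lam < 1" unfolding lam_def by linarith+
  have elam: "e \<mu> = e lam" using e_add_int[of lam "\<lfloor>\<mu>\<rfloor>"] by (simp add: lam_def)
  define g where "g = (\<lambda>z. exp (- 2 * pi * \<i> * of_real lam * z) * f z)"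
  have holg: "g holomorphic_on upper_half_plane"
    unfolding g_def by (intro holomorphic_intros hol)
  have per: "\<forall>z\<in>upper_half_plane. g (z+1) = g z"
  proof
    fix z assume z: "z \<in> upper_half_plane"
    have "g (z+1) = exp (- 2 * pi * \<i> * of_real lam * z) * (exp (- 2 * pi * \<i> * of_real lam) * e lam) * f z"
    proof -
      have f1: "f (z+1) = e lam * f z" using tr z elam by simp
      have "- 2 * pi * \<i> * of_real lam * (z+1) = - 2 * pi * \<i> * of_real lam * z + (- 2 * pi * \<i> * of_real lam)"
        by (simp add: algebra_simps)
      then have "exp (- 2 * pi * \<i> * of_real lam * (z+1)) = exp (- 2 * pi * \<i> * of_real lam * z) * exp (- 2 * pi * \<i> * of_real lam)"
        by (simp only: exp_add)
      then show ?thesis unfolding g_def f1 by (simp only: mult_ac)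
    qed
    also have "exp (- 2 * pi * \<i> * of_real lam) * e lam = 1"
      unfolding e_def by (simp add: exp_minus)
    finally show "g (z+1) = g z" unfolding g_def by simp
  qed
  from mg obtain N c where Nc: "\<forall>x y. y > c \<and> y > 0 \<longrightarrow> norm (f (Complex x y)) \<le> y powr N"
    unfolding moderate_growth_def by blast
  have bd: "\<forall>z\<in>upper_half_plane. Im z > max c 0 \<longrightarrow> norm (g z) \<le> exp (2*pi*lam*Im z) * Im z powr N"
  proof (intro ballI impI)
    fix z assume z: "z \<in> upper_half_plane" "Im z > max c 0"
    have fz: "norm (f z) \<le> Im z powr N"
      using Nc[rule_format, of "Im z" "Re z"] z by (simp add: complex_surj)
    have "norm (g z) = exp (2*pi*lam*Im z) * norm (f z)"
      unfolding g_def by (simp add: norm_mult)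
    also have "\<dots> \<le> exp (2*pi*lam*Im z) * Im z powr N"
      by (intro mult_left_mono fz) auto
    finally show "norm (g z) \<le> exp (2*pi*lam*Im z) * Im z powr N" .
  qed
  obtain a where a: "\<forall>z\<in>upper_half_plane. (\<lambda>n. a n * exp (2 * pi * \<i> * of_nat n * z)) sums g z"
    using qexp_periodic[OF holg per lam(2) bd] by blast
  have "has_convergent_q_expansion f lam a"
    unfolding has_convergent_q_expansion_def
  proof
    fix z assume z: "z \<in> upper_half_plane"
    have "f z = exp (2 * pi * \<i> * of_real lam * z) * g z"
      unfolding g_def by (simp add: mult.assoc[symmetric] exp_add[symmetric])
    then show "\<exists>s. (\<lambda>n. a n * exp (2 * pi * \<i> * of_nat n * z)) sums s \<and>
        f z = exp (2 * pi * \<i> * of_real lam * z) * s" using a z by blast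
  qed
  then show ?thesis using lam by blast
qed


lemma e_nonzero: "e r \<noteq> 0" by (simp add: e_def)
lemma e_diff: "e a / e b = e (a - b)"
  unfolding e_def by (simp add: exp_diff[symmetric] algebra_simps)
lemma e_add: "e a * e b = e (a + b)"
  unfolding e_def by (simp add: exp_add[symmetric] algebra_simps)

lemma qexp_shift:
  assumes "has_convergent_q_expansion f lam a" "z \<in> upper_half_plane"
  shows "f (z+1) = e lam * f z"
proof -
  have z1: "z + 1 \<in> upper_half_plane" using assms(2) by (simp add: upper_half_plane_def)
  obtain s where s: "(\<lambda>n. a n * exp (2 * pi * \<i> * of_nat n * z)) sums s"
     "f z = exp (2 * pi * \<i> * of_real lam * z) * s"
    using assms unfolding has_convergent_q_expansion_def by blast
  obtain s' where s': "(\<lambda>n. a n * exp (2 * pi * \<i> * of_nat n * (z+1))) sums s'"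
     "f (z+1) = exp (2 * pi * \<i> * of_real lam * (z+1)) * s'"
    using assms z1 unfolding has_convergent_q_expansion_def by blast
  have ex: "exp (2 * pi * \<i> * of_nat n * (z+1)) = exp (2 * pi * \<i> * of_nat n * z)" for n
  proof -
    have "exp (2 * pi * \<i> * of_nat n) = 1"
      using e_add_int[of 0 "int n"] by (simp add: e_def)
    moreover have "2 * pi * \<i> * of_nat n * (z+1) = 2 * pi * \<i> * of_nat n * z + 2 * pi * \<i> * of_nat n"
      by (simp add: algebra_simps)
    ultimately show ?thesis by (simp only: exp_add) simp
  qed
  have "s' = s" using s(1) s'(1) unfolding ex by (simp add: sums_unique2)
  moreover have "exp (2 * pi * \<i> * of_real lam * (z+1)) = e lam * exp (2 * pi * \<i> * of_real lam * z)"
  proof -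
    have "2 * pi * \<i> * of_real lam * (z+1) = 2 * pi * \<i> * of_real lam * z + 2 * pi * \<i> * of_real lam"
      by (simp add: algebra_simps)
    then show ?thesis unfolding e_def by (simp only: exp_add mult_ac)
  qed
  ultimately show ?thesis using s s' by simp
qed

theorem lemma2p18:
  fixes k :: real and v :: "sl2 \<Rightarrow> complex" and m :: real
    and \<rho> :: "sl2 \<Rightarrow> complex^'d^'d" and F :: "complex \<Rightarrow> complex^'d"
  assumes "multiplier_system k v"
    and "cusp_parameter v m"
    and "representation \<rho>"
    and "F \<in> vvmf_space k \<rho> v"
    and "components_lin_indep F"
  shows "(\<forall>j. \<exists>lam a. lam \<ge> 0 \<and> has_convergent_q_expansion (\<lambda>z. F z $ j) lam a)
     \<longleftrightarrow> (\<exists>r :: 'd \<Rightarrow> real. \<rho> T_mat = (\<chi> i j. if i = j then e (r i) else 0))"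
proof -
  have TS: "T_mat \<in> SL2Z" by (simp add: T_mat_def SL2Z_def)
  have vT: "v T_mat = e (m/12)" using assms(2) by (simp add: cusp_parameter_def)
  have key: "F (z+1) $ j = v T_mat * (\<Sum>i\<in>UNIV. \<rho> T_mat $ j $ i * F z $ i)"
    if z: "z \<in> upper_half_plane" for z j
  proof -
    have "slash k v F T_mat z = \<rho> T_mat *v F z"
      using assms(4) TS z by (simp add: vvmf_space_def)
    then have "slash k v F T_mat z $ j = (\<rho> T_mat *v F z) $ j" by simp
    then have "inverse (v T_mat) * F (z+1) $ j = (\<Sum>i\<in>UNIV. \<rho> T_mat $ j $ i * F z $ i)"
      by (simp add: slash_def T_mat_def matrix_vector_mult_def add.commute)
    then show ?thesis using vT e_nonzero by (simp add: field_simps)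
  qed
  have hol: "(\<lambda>z. F z $ j) holomorphic_on upper_half_plane" for j
    using assms(4) by (simp add: vvmf_space_def)
  have mg: "moderate_growth (\<lambda>z. F z $ j)" for j
    using assms(4) by (simp add: vvmf_space_def)
  show ?thesis
  proof
    assume "\<forall>j. \<exists>lam a. lam \<ge> 0 \<and> has_convergent_q_expansion (\<lambda>z. F z $ j) lam a"
    then obtain lam a where la: "\<And>j. has_convergent_q_expansion (\<lambda>z. F z $ j) (lam j) (a j)"
      by metis
    have coef: "v T_mat * \<rho> T_mat $ j $ i = (if i = j then e (lam j) else 0)" for i j
    proof -
      define c where "c = (\<lambda>i. v T_mat * \<rho> T_mat $ j $ i - (if i = j then e (lam j) else 0))"
      have "\<forall>z\<in>upper_half_plane. (\<Sum>i\<in>UNIV. c i * F z $ i) = 0"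
      proof
        fix z assume z: "z \<in> upper_half_plane"
        have "(\<Sum>i\<in>UNIV. c i * F z $ i) = v T_mat * (\<Sum>i\<in>UNIV. \<rho> T_mat $ j $ i * F z $ i)
              - (\<Sum>i\<in>UNIV. (if i = j then e (lam j) else 0) * F z $ i)"
          unfolding c_def by (simp add: algebra_simps sum_subtractf sum_distrib_left)
        also have "\<dots> = F (z+1) $ j - e (lam j) * F z $ j"
        proof -
          have eq: "(\<lambda>i. (if i = j then e (lam j) else 0) * F z $ i) = (\<lambda>i. if i = j then e (lam j) * F z $ j else 0)"
            by auto
          show ?thesis using key[OF z, of j] unfolding eq by simp
        qed
        also have "\<dots> = 0" using qexp_shift[OF la z] by simp
        finally show "(\<Sum>i\<in>UNIV. c i * F z $ i) = 0" .
      qed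
      then have "c i = 0" using assms(5) unfolding components_lin_indep_def by blast
      then show ?thesis unfolding c_def by simp
    qed
    have "\<rho> T_mat = (\<chi> i j. if i = j then e (lam i - m/12) else 0)"
    proof (intro vec_eq_iff[THEN iffD2] allI)
      fix i j
      have "\<rho> T_mat $ i $ j = (if j = i then e (lam i) else 0) / v T_mat"
        using coef[of i j] vT e_nonzero by (simp add: field_simps)
      then show "\<rho> T_mat $ i $ j = (\<chi> i j. if i = j then e (lam i - m / 12) else 0) $ i $ j"
        using vT by (auto simp: e_diff)
    qed
    then show "\<exists>r :: 'd \<Rightarrow> real. \<rho> T_mat = (\<chi> i j. if i = j then e (r i) else 0)"
      by (intro exI[of _ "\<lambda>i. lam i - m/12"]) simp
  next
    assume "\<exists>r :: 'd \<Rightarrow> real. \<rho> T_mat = (\<chi> i j. if i = j then e (r i) else 0)"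
    then obtain r :: "'d \<Rightarrow> real" where r: "\<rho> T_mat = (\<chi> i j. if i = j then e (r i) else 0)" by blast
    show "\<forall>j. \<exists>lam a. lam \<ge> 0 \<and> has_convergent_q_expansion (\<lambda>z. F z $ j) lam a"
    proof
      fix j
      have "\<forall>z\<in>upper_half_plane. F (z+1) $ j = e (m/12 + r j) * F z $ j"
      proof
        fix z assume z: "z \<in> upper_half_plane"
        have "(\<Sum>i\<in>UNIV. \<rho> T_mat $ j $ i * F z $ i) = e (r j) * F z $ j"
        proof -
          have eq: "(\<lambda>i. (\<chi> i j. if i = j then e (r i) else 0) $ j $ i * F z $ i) = (\<lambda>i. if j = i then e (r j) * F z $ j else 0)"
            by auto
          show ?thesis unfolding r eq by simp
        qed
        then show "F (z+1) $ j = e (m/12 + r j) * F z $ j"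
          using key[OF z, of j] vT by (simp add: e_add[symmetric])
      qed
      then show "\<exists>lam a. lam \<ge> 0 \<and> has_convergent_q_expansion (\<lambda>z. F z $ j) lam a"
        using qexp_f[OF hol mg] by blast
    qed
  qed
qed

end
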